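(* Let $\kappa\in(0,1)$, $\tau>0$, $\Omega\in\mathbb{R}\setminus\{0\}$ and $W>0$ be independent parameters, and let $\Psi(P)=1$ if $|P|<W$ and $\Psi(P)=0$ otherwise. Consider the eigenvalue problem $$\tau\lambda\,Z(P)=\tau\Omega\,Z'(P)-Z(P)+\kappa^{-1}\Psi(P)Z(P)-\kappa^{-1}\int_{-\infty}^{\infty}\Psi(Q)Z(Q)\,dQ,\qquad P\in\mathbb{R},$$ for $\lambda\in\mathbb{C}$ and $Z:\mathbb{R}\to\mathbb{C}$ continuous, growing at most linearly, and satisfying the equation on $\mathbb{R}\setminus\{-W,W\}$. Call $\lambda$ an eigenvalue if there is a nontrivial such $Z$. Then: (i) A complex number $\lambda$ with $\operatorname{Re}(\tau\lambda)<-1$ is an eigenvalue if and only if $$\exp\Big(\frac{\kappa\tau\lambda+\kappa-1}{\kappa\tau|\Omega|}\,2W\Big)-1=\frac{(\kappa\tau\lambda+\kappa)(\kappa\tau\lambda+\kappa-1)(\kappa\tau\lambda+\kappa-1+2W)}{\kappa\tau|\Omega|}.$$ (ii) For every $\lambda\in\mathbb{C}$ with $\operatorname{Re}(\tau\lambda)=-1$ there exists a corresponding eigenfunction. (iii) A complex number $\lambda$ with $\operatorname{Re}(\tau\lambda)>-1$ is an eigenvalue if and only if both $$1-\exp\Big(-\frac{\kappa\tau\lambda+\kappa-1}{\kappa\tau|\Omega|}\,2W\Big)=\frac{(\kappa\tau\lambda+\kappa)(\kappa\tau\lambda+\kappa-1)(\kappa\tau\lambda+\kappa-1+2W)}{\kappa\tau|\Omega|}$$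 and $\tau\lambda\neq(1-\kappa)/\kappa$ hold. Moreover, all eigenvalues in the cases (i) and (iii) are simple and have bounded eigenfunctions.
   Context: This eigenvalue problem is the linearization, in a comoving frame $P=p-\tfrac12(\Xi_-+\Xi_+)-\Omega t$ with $z(t,p)=e^{\lambda t}Z(P)$, of the mean-field particle dynamics $\tau\partial_t x=\sigma(t)+\delta(p-\tfrac12)-H'(x)$ (with trilinear $H'$ having spinodal region $[-\kappa,\kappa]$) around a traveling wave of speed $\Omega$ whose spinodal stripe has half width $W$. In this statement, however, $W$ is not required to satisfy any traveling-wave relation. The set in (ii) is called the continuous spectrum. *)

theory Defs
  imports "HOL-Analysis.Analysis"
begin

definition Psi :: "real \<Rightarrow> real \<Rightarrow> real" where
  "Psi W P = (if \<bar>P\<bar> < W then 1 else 0)"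

definition is_eigenfunction ::
  "real \<Rightarrow> real \<Rightarrow> real \<Rightarrow> real \<Rightarrow> complex \<Rightarrow> (real \<Rightarrow> complex) \<Rightarrow> bool" where
  "is_eigenfunction \<kappa> \<tau> \<Omega> W lam Z \<longleftrightarrow>
     continuous_on UNIV Z \<and>
     (\<exists>C. \<forall>P. norm (Z P) \<le> C * (1 + \<bar>P\<bar>)) \<and>
     Z \<noteq> (\<lambda>_. 0) \<and>
     (\<forall>P. P \<noteq> -W \<and> P \<noteq> W \<longrightarrow>
        (\<exists>Z'. (Z has_vector_derivative Z') (at P) \<and>
           complex_of_real \<tau> * lam * Z P =
             complex_of_real (\<tau> * \<Omega>) * Z' - Z P
             + complex_of_real (Psi W P / \<kappa>) * Z P
             - complex_of_real (1 / \<kappa>) *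
                 integral UNIV (\<lambda>Q. complex_of_real (Psi W Q) * Z Q)))"

definition is_eigenvalue :: "real \<Rightarrow> real \<Rightarrow> real \<Rightarrow> real \<Rightarrow> complex \<Rightarrow> bool" where
  "is_eigenvalue \<kappa> \<tau> \<Omega> W lam \<longleftrightarrow> (\<exists>Z. is_eigenfunction \<kappa> \<tau> \<Omega> W lam Z)"

end

theory Submission
  imports Defs "HOL-Real_Asymp.Real_Asymp"
begin

lemma vd_exp:
  fixes \<alpha> :: complex
  shows "((\<lambda>x::real. exp (\<alpha> * of_real x)) has_vector_derivative (\<alpha> * exp (\<alpha> * of_real x))) (at x within S)"
proof -
  have "((\<lambda>z. exp (\<alpha> * z)) has_field_derivative (\<alpha> * exp (\<alpha> * of_real x))) (at (of_real x))"
    by (auto intro!: derivative_eq_intros)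
  from has_vector_derivative_real_field[OF this] show ?thesis by simp
qed

lemma vd_ofreal:
  "((\<lambda>x::real. (of_real x :: complex)) has_vector_derivative 1) (at x within S)"
  using has_vector_derivative_of_real[of "\<lambda>x. x" 1] by (auto intro: derivative_eq_intros)

lemma ode_sol:
  fixes Z :: "real \<Rightarrow> complex"
  assumes S: "convex S" "finite K" "continuous_on S Z" "c \<in> S"
    and d: "\<And>P. P \<in> S - K \<Longrightarrow> (Z has_vector_derivative (\<alpha> * Z P + \<beta>)) (at P)"
    and a: "\<alpha> \<noteq> 0" and P: "P \<in> S"
  shows "Z P = (Z c + \<beta>/\<alpha>) * exp (\<alpha> * of_real (P - c)) - \<beta>/\<alpha>"
proof -
  define g where "g x = (Z x + \<beta>/\<alpha>) * exp (- \<alpha> * of_real x)" for x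
  have "g P = g c"
  proof (rule has_derivative_zero_unique_strong_convex[OF S(1,2) _ S(4) refl _ P])
    show "continuous_on S g" unfolding g_def
      by (intro continuous_intros S(3))
    fix x assume x: "x \<in> S - K"
    have "(g has_vector_derivative ((Z x + \<beta>/\<alpha>) * (- \<alpha> * exp (- \<alpha> * of_real x)) + (\<alpha> * Z x + \<beta> + 0) * exp (- \<alpha> * of_real x))) (at x within S)"
      unfolding g_def
      by (intro has_vector_derivative_mult has_vector_derivative_add vd_exp has_vector_derivative_at_within[OF d[OF x]] has_vector_derivative_const)
    also have "(Z x + \<beta>/\<alpha>) * (- \<alpha> * exp (- \<alpha> * of_real x)) + (\<alpha> * Z x + \<beta> + 0) * exp (- \<alpha> * of_real x) = 0"
      using a by (simp add: field_simps)
    finally show "(g has_derivative (\<lambda>h. 0)) (at x within S)"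
      by (simp add: has_vector_derivative_def)
  qed
  hence "(Z P + \<beta>/\<alpha>) * exp (- \<alpha> * of_real P) = (Z c + \<beta>/\<alpha>) * exp (- \<alpha> * of_real c)"
    by (simp add: g_def)
  hence eq: "(Z P + \<beta>/\<alpha>) * exp (- \<alpha> * of_real P) * exp (\<alpha> * of_real P) = (Z c + \<beta>/\<alpha>) * (exp (- \<alpha> * of_real c) * exp (\<alpha> * of_real P))"
    by simp
  have e1: "exp (- \<alpha> * of_real P) * exp (\<alpha> * of_real P) = 1"
    by (simp add: exp_add[symmetric])
  have e2: "exp (- \<alpha> * of_real c) * exp (\<alpha> * of_real P) = exp (\<alpha> * of_real (P - c))"
    by (simp add: exp_add[symmetric] algebra_simps)
  from eq have "Z P + \<beta>/\<alpha> = (Z c + \<beta>/\<alpha>) * exp (\<alpha> * of_real (P - c))"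
    by (simp only: mult.assoc e1 e2 mult_1_right)
  thus ?thesis by (simp add: algebra_simps)
qed

lemma ode_sol0:
  fixes Z :: "real \<Rightarrow> complex"
  assumes S: "convex S" "finite K" "continuous_on S Z" "c \<in> S"
    and d: "\<And>P. P \<in> S - K \<Longrightarrow> (Z has_vector_derivative \<beta>) (at P)"
    and P: "P \<in> S"
  shows "Z P = Z c + \<beta> * of_real (P - c)"
proof -
  define g where "g x = Z x - \<beta> * of_real x" for x
  have "g P = g c"
  proof (rule has_derivative_zero_unique_strong_convex[OF S(1,2) _ S(4) refl _ P])
    show "continuous_on S g" unfolding g_def
      by (intro continuous_intros S(3))
    fix x assume x: "x \<in> S - K"
    have "(g has_vector_derivative (\<beta> - \<beta> * 1)) (at x within S)"
      unfolding g_def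
      by (intro has_vector_derivative_diff has_vector_derivative_mult_right vd_ofreal has_vector_derivative_at_within[OF d[OF x]])
    thus "(g has_derivative (\<lambda>h. 0)) (at x within S)"
      by (simp add: has_vector_derivative_def)
  qed
  thus ?thesis by (simp add: g_def algebra_simps)
qed

lemma psi_has_integral:
  fixes Z :: "real \<Rightarrow> complex"
  assumes "(Z has_integral J) {-W..W}"
  shows "((\<lambda>Q. of_real (Psi W Q) * Z Q) has_integral J) UNIV"
proof -
  have "(Z has_integral J) {-W<..<W}" using assms has_integral_Icc_iff_Ioo by blast
  hence "((\<lambda>Q. if Q \<in> {-W<..<W} then Z Q else 0) has_integral J) UNIV"
    using has_integral_restrict_UNIV by blast
  moreover have "(\<lambda>Q. if Q \<in> {-W<..<W} then Z Q else 0) = (\<lambda>Q. of_real (Psi W Q) * Z Q)"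
    by (auto simp: Psi_def fun_eq_iff abs_less_iff)
  ultimately show ?thesis by simp
qed

lemma exp_growth_zero:
  fixes C D \<alpha> :: complex
  assumes r: "Re \<alpha> > 0" and bd: "\<And>P. P \<ge> pz \<Longrightarrow> norm (C * exp (\<alpha> * of_real P) + D) \<le> K * (1 + \<bar>P\<bar>)"
  shows "C = 0"
proof (rule ccontr)
  assume C: "C \<noteq> 0"
  define r where "r = Re \<alpha>"
  have "eventually (\<lambda>P. exp (r * P) > (K + norm D) / norm C + (K / norm C) * P) at_top"
    using r unfolding r_def by real_asymp
  moreover have "eventually (\<lambda>P. P \<ge> max pz 0) at_top" by (rule eventually_ge_at_top)
  ultimately have "eventually (\<lambda>P. exp (r * P) > (K + norm D) / norm C + (K / norm C) * P \<and> P \<ge> max pz 0) at_top"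
    by (rule eventually_conj)
  then obtain P where P1: "exp (r * P) > (K + norm D) / norm C + (K / norm C) * P" and P2: "P \<ge> max pz 0"
    unfolding eventually_at_top_linorder by blast
  have "norm C * exp (r * P) = norm (C * exp (\<alpha> * of_real P))"
    by (simp add: norm_mult r_def)
  also have "\<dots> \<le> norm (C * exp (\<alpha> * of_real P) + D) + norm D"
    by (metis add_diff_cancel_right' norm_triangle_ineq4)
  also have "\<dots> \<le> K * (1 + P) + norm D" using bd[of P] P2 by simp
  finally have "norm C * exp (r * P) \<le> K * (1 + P) + norm D" .
  moreover have "norm C * exp (r * P) > norm C * ((K + norm D) / norm C + (K / norm C) * P)"
    using P1 C by simp
  moreover have "norm C * ((K + norm D) / norm C + (K / norm C) * P) = K * (1 + P) + norm D"
    using C by (simp add: field_simps)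
  ultimately show False by simp
qed

lemma exp_growth_zero':
  fixes C D \<alpha> :: complex
  assumes r: "Re \<alpha> < 0" and bd: "\<And>P. P \<le> pz \<Longrightarrow> norm (C * exp (\<alpha> * of_real P) + D) \<le> K * (1 + \<bar>P\<bar>)"
  shows "C = 0"
proof (rule exp_growth_zero[of "-\<alpha>" "-pz" C D K])
  show "0 < Re (- \<alpha>)" using r by simp
  fix P :: real assume "P \<ge> -pz"
  hence "norm (C * exp (\<alpha> * of_real (-P)) + D) \<le> K * (1 + \<bar>-P\<bar>)" by (intro bd) simp
  thus "norm (C * exp (- \<alpha> * of_real P) + D) \<le> K * (1 + \<bar>P\<bar>)" by simp
qed

lemma vd_exp_shift:
  fixes \<alpha> :: complex
  shows "((\<lambda>x::real. exp (\<alpha> * of_real (x - c))) has_vector_derivative (\<alpha> * exp (\<alpha> * of_real (x - c)))) (at x within S)"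
proof -
  have "((\<lambda>z. exp (\<alpha> * (z - of_real c))) has_field_derivative (\<alpha> * exp (\<alpha> * of_real (x - c)))) (at (of_real x))"
    by (auto intro!: derivative_eq_intros)
  from has_vector_derivative_real_field[OF this] show ?thesis by simp
qed

lemma ftc_at:
  fixes F f :: "real \<Rightarrow> complex"
  assumes "a \<le> b" "\<And>x. (F has_vector_derivative f x) (at x)"
  shows "(f has_integral (F b - F a)) {a..b}"
  by (rule fundamental_theorem_of_calculus[OF assms(1)]) (use assms(2) has_vector_derivative_at_within in blast)

locale eig =
  fixes \<kappa> \<tau> \<Omega> W :: real and lam :: complex
  assumes kp: "0 < \<kappa>" and k1: "\<kappa> < 1" and tp: "0 < \<tau>" and Op: "0 < \<Omega>" and Wp: "0 < W"
begin

definition "m = of_real \<tau> * lam + 1"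
definition "k = of_real \<kappa> * m - 1"
definition "s = \<kappa> * \<tau> * \<Omega>"
definition "a = m / of_real (\<tau> * \<Omega>)"
definition "b = k / of_real s"
definition "IZ Z = integral UNIV (\<lambda>Q. of_real (Psi W Q) * Z Q)"

lemma s_pos: "s > 0" using kp tp Op by (simp add: s_def)

lemma deriv_gen:
  assumes "is_eigenfunction \<kappa> \<tau> \<Omega> W lam Z" "P \<noteq> -W" "P \<noteq> W"
  shows "(Z has_vector_derivative ((m - of_real (Psi W P / \<kappa>)) * Z P + IZ Z / of_real \<kappa>) / of_real (\<tau> * \<Omega>)) (at P)"
proof -
  obtain Z' where d: "(Z has_vector_derivative Z') (at P)" and
    e: "complex_of_real \<tau> * lam * Z P =
             complex_of_real (\<tau> * \<Omega>) * Z' - Z P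
             + complex_of_real (Psi W P / \<kappa>) * Z P
             - complex_of_real (1 / \<kappa>) * IZ Z"
    using assms unfolding is_eigenfunction_def IZ_def by blast
  have "of_real (\<tau> * \<Omega>) * Z' = (m - of_real (Psi W P / \<kappa>)) * Z P + of_real (1/\<kappa>) * IZ Z"
    using e unfolding m_def by algebra
  hence "Z' = ((m - of_real (Psi W P / \<kappa>)) * Z P + IZ Z / of_real \<kappa>) / of_real (\<tau> * \<Omega>)"
    using tp Op kp by (simp add: field_simps)
  with d show ?thesis by simp
qed

lemma deriv_out:
  assumes "is_eigenfunction \<kappa> \<tau> \<Omega> W lam Z" "\<bar>P\<bar> > W"
  shows "(Z has_vector_derivative (a * Z P + IZ Z / of_real s)) (at P)"
proof -
  have "Psi W P = 0" using assms by (simp add: Psi_def)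
  moreover have "((m - 0) * Z P + IZ Z / of_real \<kappa>) / of_real (\<tau> * \<Omega>) = a * Z P + IZ Z / of_real s"
    using tp Op kp by (simp add: a_def s_def field_simps)
  moreover have "P \<noteq> -W" "P \<noteq> W" using assms(2) Wp by auto
  ultimately show ?thesis using deriv_gen[OF assms(1), of P] by simp
qed

lemma deriv_in:
  assumes "is_eigenfunction \<kappa> \<tau> \<Omega> W lam Z" "\<bar>P\<bar> < W"
  shows "(Z has_vector_derivative (b * Z P + IZ Z / of_real s)) (at P)"
proof -
  have "Psi W P = 1" using assms by (simp add: Psi_def)
  moreover have "((m - of_real (1/\<kappa>)) * Z P + IZ Z / of_real \<kappa>) / of_real (\<tau> * \<Omega>) = b * Z P + IZ Z / of_real s"
    using tp Op kp by (simp add: b_def k_def s_def field_simps)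
  moreover have "P \<noteq> -W" "P \<noteq> W" using assms(2) Wp by auto
  ultimately show ?thesis using deriv_gen[OF assms(1), of P] by simp
qed


lemma ef_cont: "is_eigenfunction \<kappa> \<tau> \<Omega> W lam Z \<Longrightarrow> continuous_on S Z"
  unfolding is_eigenfunction_def by (meson continuous_on_subset subset_UNIV)

lemma sa: "m \<noteq> 0 \<Longrightarrow> (I / of_real s) / a = I / (of_real \<kappa> * m)"
  using kp tp Op by (simp add: a_def s_def field_simps)

lemma sb: "k \<noteq> 0 \<Longrightarrow> (I / of_real s) / b = I / k"
  using kp tp Op by (simp add: b_def s_def field_simps)

lemma Re_a: "Re a = Re m / (\<tau> * \<Omega>)"
  by (simp add: a_def Re_divide_of_real)

lemma out_left:
  assumes Z: "is_eigenfunction \<kappa> \<tau> \<Omega> W lam Z" and m0: "m \<noteq> 0" and P: "P \<le> -W"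
  shows "Z P = (Z (-W) + IZ Z / (of_real \<kappa> * m)) * exp (a * of_real (P + W)) - IZ Z / (of_real \<kappa> * m)"
proof -
  have a0: "a \<noteq> 0" using m0 tp Op by (simp add: a_def)
  have "Z P = (Z (-W) + (IZ Z / of_real s)/a) * exp (a * of_real (P - (-W))) - (IZ Z / of_real s)/a"
  proof (rule ode_sol[where S="{..-W}" and K="{-W}"])
    fix x assume "x \<in> {..-W} - {-W}"
    hence "\<bar>x\<bar> > W" using Wp by auto
    thus "(Z has_vector_derivative a * Z x + IZ Z / complex_of_real s) (at x)" by (rule deriv_out[OF Z])
  qed (use a0 P ef_cont[OF Z] in auto)
  thus ?thesis by (simp only: sa[OF m0] diff_minus_eq_add)
qed

lemma out_right:
  assumes Z: "is_eigenfunction \<kappa> \<tau> \<Omega> W lam Z" and m0: "m \<noteq> 0" and P: "P \<ge> W"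
  shows "Z P = (Z W + IZ Z / (of_real \<kappa> * m)) * exp (a * of_real (P - W)) - IZ Z / (of_real \<kappa> * m)"
proof -
  have a0: "a \<noteq> 0" using m0 tp Op by (simp add: a_def)
  have "Z P = (Z W + (IZ Z / of_real s)/a) * exp (a * of_real (P - W)) - (IZ Z / of_real s)/a"
  proof (rule ode_sol[where S="{W..}" and K="{W}"])
    fix x assume "x \<in> {W..} - {W}"
    hence "\<bar>x\<bar> > W" using Wp by auto
    thus "(Z has_vector_derivative a * Z x + IZ Z / complex_of_real s) (at x)" by (rule deriv_out[OF Z])
  qed (use a0 P ef_cont[OF Z] in auto)
  thus ?thesis by (simp only: sa[OF m0])
qed

lemma inside:
  assumes Z: "is_eigenfunction \<kappa> \<tau> \<Omega> W lam Z" and k0: "k \<noteq> 0" and P: "\<bar>P\<bar> \<le> W" and c: "\<bar>c\<bar> \<le> W"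
  shows "Z P = (Z c + IZ Z / k) * exp (b * of_real (P - c)) - IZ Z / k"
proof -
  have b0: "b \<noteq> 0" using k0 s_pos by (simp add: b_def)
  have "Z P = (Z c + (IZ Z / of_real s)/b) * exp (b * of_real (P - c)) - (IZ Z / of_real s)/b"
  proof (rule ode_sol[where S="{-W..W}" and K="{-W,W}"])
    fix x assume "x \<in> {-W..W} - {-W,W}"
    hence "\<bar>x\<bar> < W" using Wp by auto
    thus "(Z has_vector_derivative b * Z x + IZ Z / complex_of_real s) (at x)" by (rule deriv_in[OF Z])
  qed (use b0 P c ef_cont[OF Z] in auto)
  thus ?thesis by (simp only: sb[OF k0])
qed

lemma inside0:
  assumes Z: "is_eigenfunction \<kappa> \<tau> \<Omega> W lam Z" and k0: "k = 0" and P: "\<bar>P\<bar> \<le> W" and c: "\<bar>c\<bar> \<le> W"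
  shows "Z P = Z c + (IZ Z / of_real s) * of_real (P - c)"
proof (rule ode_sol0[where S="{-W..W}" and K="{-W,W}"])
  fix x assume "x \<in> {-W..W} - {-W,W}"
  hence "\<bar>x\<bar> < W" using Wp by auto
  from deriv_in[OF Z this] show "(Z has_vector_derivative IZ Z / complex_of_real s) (at x)"
    using k0 by (simp add: b_def)
qed (use P c ef_cont[OF Z] in auto)

lemma growth:
  assumes Z: "is_eigenfunction \<kappa> \<tau> \<Omega> W lam Z"
  obtains C where "\<And>P. norm (Z P) \<le> C * (1 + \<bar>P\<bar>)"
  using Z unfolding is_eigenfunction_def by blast

lemma const_left:
  assumes Z: "is_eigenfunction \<kappa> \<tau> \<Omega> W lam Z" and r: "Re m < 0" and P: "P \<le> -W"
  shows "Z P = - IZ Z / (of_real \<kappa> * m)"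
proof -
  have m0: "m \<noteq> 0" using r by auto
  obtain C where C: "\<And>P. norm (Z P) \<le> C * (1 + \<bar>P\<bar>)"
    using Z unfolding is_eigenfunction_def by blast
  define q where "q = IZ Z / (of_real \<kappa> * m)"
  have ra: "Re a < 0" using r tp Op by (simp add: Re_a divide_neg_pos)
  have "(Z (-W) + q) * exp (a * of_real W) = 0"
  proof (rule exp_growth_zero'[OF ra, where pz="-W" and D="-q" and K=C])
    fix P :: real assume P: "P \<le> -W"
    have "Z P = (Z (-W) + q) * exp (a * of_real (P + W)) - q" using out_left[OF Z m0 P] unfolding q_def .
    also have "\<dots> = (Z (-W) + q) * exp (a * of_real W) * exp (a * of_real P) + - q"
      by (simp add: exp_add[symmetric] algebra_simps)
    finally show "norm ((Z (-W) + q) * exp (a * of_real W) * exp (a * of_real P) + - q) \<le> C * (1 + \<bar>P\<bar>)"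
      using C[of P] by simp
  qed
  hence "Z (-W) + q = 0" by simp
  thus ?thesis using out_left[OF Z m0 P] q_def by simp
qed

lemma const_right:
  assumes Z: "is_eigenfunction \<kappa> \<tau> \<Omega> W lam Z" and r: "Re m > 0" and P: "P \<ge> W"
  shows "Z P = - IZ Z / (of_real \<kappa> * m)"
proof -
  have m0: "m \<noteq> 0" using r by auto
  obtain C where C: "\<And>P. norm (Z P) \<le> C * (1 + \<bar>P\<bar>)"
    using Z unfolding is_eigenfunction_def by blast
  define q where "q = IZ Z / (of_real \<kappa> * m)"
  have ra: "Re a > 0" using r tp Op by (simp add: Re_a)
  have "(Z W + q) * exp (- a * of_real W) = 0"
  proof (rule exp_growth_zero[OF ra, where pz="W" and D="-q" and K=C])
    fix P :: real assume P: "P \<ge> W"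
    have "Z P = (Z W + q) * exp (a * of_real (P - W)) - q" using out_right[OF Z m0 P] unfolding q_def .
    also have "\<dots> = (Z W + q) * exp (- a * of_real W) * exp (a * of_real P) + - q"
      by (simp add: exp_add[symmetric] algebra_simps)
    finally show "norm ((Z W + q) * exp (- a * of_real W) * exp (a * of_real P) + - q) \<le> C * (1 + \<bar>P\<bar>)"
      using C[of P] by simp
  qed
  hence "Z W + q = 0" by simp
  thus ?thesis using out_right[OF Z m0 P] q_def by simp
qed


lemma cont_of_deriv:
  assumes "\<And>P. (f has_vector_derivative f' P) (at P)"
  shows "continuous_on T f"
  by (meson assms continuous_at_imp_continuous_on has_vector_derivative_continuous)

lemma bounded_on_interval:
  fixes f :: "real \<Rightarrow> complex"
  assumes "continuous_on {-W..W} f"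
  obtains M where "M \<ge> 0" "\<And>P. \<bar>P\<bar> \<le> W \<Longrightarrow> norm (f P) \<le> M"
proof -
  have "bounded (f ` {-W..W})" by (intro compact_imp_bounded compact_continuous_image assms) auto
  then obtain M where M: "\<And>x. x \<in> f ` {-W..W} \<Longrightarrow> norm x \<le> M" unfolding bounded_iff by blast
  show ?thesis
  proof (rule that[of "max M 0"])
    fix P :: real assume "\<bar>P\<bar> \<le> W"
    hence "P \<in> {-W..W}" by auto
    thus "norm (f P) \<le> max M 0" using M by force
  qed simp
qed

lemma verify:
  fixes f1 f2 f3 :: "real \<Rightarrow> complex" and I :: complex
  assumes d1: "\<And>P. (f1 has_vector_derivative (a * f1 P + I / of_real s)) (at P)"
  and d2: "\<And>P. (f2 has_vector_derivative (b * f2 P + I / of_real s)) (at P)"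
  and d3: "\<And>P. (f3 has_vector_derivative (a * f3 P + I / of_real s)) (at P)"
  and c1: "f1 (-W) = f2 (-W)" and c3: "f2 W = f3 W"
  and int: "(f2 has_integral I) {-W..W}"
  and g1: "\<And>P. P \<le> -W \<Longrightarrow> norm (f1 P) \<le> Ca * (1 + \<bar>P\<bar>)"
  and g3: "\<And>P. P \<ge> W \<Longrightarrow> norm (f3 P) \<le> Cb * (1 + \<bar>P\<bar>)"
  and nz: "I \<noteq> 0 \<or> (\<exists>P. (if P \<le> -W then f1 P else if P \<le> W then f2 P else f3 P) \<noteq> 0)"
  shows "is_eigenfunction \<kappa> \<tau> \<Omega> W lam (\<lambda>P. if P \<le> -W then f1 P else if P \<le> W then f2 P else f3 P)"
proof -
  define Z where "Z = (\<lambda>P. if P \<le> -W then f1 P else if P \<le> W then f2 P else f3 P)"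
  have cf1: "continuous_on T f1" for T by (rule cont_of_deriv[OF d1])
  have cf2: "continuous_on T f2" for T by (rule cont_of_deriv[OF d2])
  have cf3: "continuous_on T f3" for T by (rule cont_of_deriv[OF d3])
  have inner: "continuous_on T (\<lambda>P. if P \<le> W then f2 P else f3 P)" for T
    by (rule continuous_on_cases_le[where h="\<lambda>x. x"]) (use cf2 cf3 c3 in \<open>auto intro: continuous_intros\<close>)
  have cont: "continuous_on UNIV Z" unfolding Z_def
    by (rule continuous_on_cases_le[where h="\<lambda>x. x"]) (use cf1 inner c1 Wp in \<open>auto intro: continuous_intros\<close>)
  obtain M where M: "M \<ge> 0" "\<And>P. \<bar>P\<bar> \<le> W \<Longrightarrow> norm (f2 P) \<le> M"
    using bounded_on_interval[OF cf2] by blast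
  define C where "C = max (max Ca Cb) M"
  have gr: "norm (Z P) \<le> C * (1 + \<bar>P\<bar>)" for P
  proof -
    have pos: "1 + \<bar>P\<bar> \<ge> 1" by simp
    consider "P \<le> -W" | "\<bar>P\<bar> \<le> W" "\<not> P \<le> -W" | "P > W" by linarith
    thus ?thesis
    proof cases
      case 1
      hence "norm (Z P) \<le> Ca * (1 + \<bar>P\<bar>)" using g1 by (simp add: Z_def)
      also have "\<dots> \<le> C * (1 + \<bar>P\<bar>)" by (intro mult_right_mono) (auto simp: C_def)
      finally show ?thesis .
    next
      case 2
      hence "P \<le> W" by simp
      hence "norm (Z P) \<le> M" using M 2 by (simp add: Z_def)
      also have "\<dots> \<le> C" by (simp add: C_def)
      also have "\<dots> \<le> C * (1 + \<bar>P\<bar>)" using M(1) pos by (intro mult_le_cancel_left1[THEN iffD2] impI) (auto simp: C_def)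
      finally show ?thesis .
    next
      case 3
      hence "norm (Z P) \<le> Cb * (1 + \<bar>P\<bar>)" using g3 Wp by (simp add: Z_def)
      also have "\<dots> \<le> C * (1 + \<bar>P\<bar>)" by (intro mult_right_mono) (auto simp: C_def)
      finally show ?thesis .
    qed
  qed
  have "(Z has_integral I) {-W..W}"
    using int by (rule has_integral_cong[THEN iffD1, rotated]) (auto simp: Z_def c1)
  hence IZ: "IZ Z = I" unfolding IZ_def by (intro integral_unique psi_has_integral)
  have Znz: "Z \<noteq> (\<lambda>_. 0)"
  proof
    assume Z0: "Z = (\<lambda>_. 0)"
    hence "IZ Z = 0" by (simp add: IZ_def)
    thus False using nz Z0 IZ unfolding Z_def by (metis (mono_tags, lifting))
  qed
  have der: "\<exists>Z'. (Z has_vector_derivative Z') (at P) \<and>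
           complex_of_real \<tau> * lam * Z P =
             complex_of_real (\<tau> * \<Omega>) * Z' - Z P
             + complex_of_real (Psi W P / \<kappa>) * Z P
             - complex_of_real (1 / \<kappa>) *
                 integral UNIV (\<lambda>Q. complex_of_real (Psi W Q) * Z Q)" if P: "P \<noteq> -W" "P \<noteq> W" for P
  proof -
    have I': "integral UNIV (\<lambda>Q. complex_of_real (Psi W Q) * Z Q) = I" using IZ by (simp add: IZ_def)
    consider "P < -W" | "\<bar>P\<bar> < W" | "P > W" using P by linarith
    thus ?thesis
    proof cases
      case 1
      have "(Z has_vector_derivative (a * f1 P + I / of_real s)) (at P)"
        by (rule has_vector_derivative_transform_within_open[OF d1, of "{..<-W}"]) (use 1 in \<open>auto simp: Z_def\<close>)
      moreover have "Psi W P = 0" "Z P = f1 P" using 1 Wp by (auto simp: Psi_def Z_def)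
      moreover have "complex_of_real \<tau> * lam * f1 P =
             complex_of_real (\<tau> * \<Omega>) * (a * f1 P + I / of_real s) - f1 P
             + complex_of_real (0 / \<kappa>) * f1 P - complex_of_real (1 / \<kappa>) * I"
        using tp Op kp by (simp add: a_def s_def m_def field_simps)
      ultimately show ?thesis unfolding I' by metis
    next
      case 2
      have "(Z has_vector_derivative (b * f2 P + I / of_real s)) (at P)"
        by (rule has_vector_derivative_transform_within_open[OF d2, of "{-W<..<W}"]) (use 2 in \<open>auto simp: Z_def\<close>)
      moreover have "Psi W P = 1" "Z P = f2 P" using 2 Wp by (auto simp: Psi_def Z_def)
      moreover have "complex_of_real \<tau> * lam * f2 P =
             complex_of_real (\<tau> * \<Omega>) * (b * f2 P + I / of_real s) - f2 P
             + complex_of_real (1 / \<kappa>) * f2 P - complex_of_real (1 / \<kappa>) * I"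
        using tp Op kp by (simp add: b_def k_def s_def m_def field_simps)
      ultimately show ?thesis unfolding I' by metis
    next
      case 3
      have "(Z has_vector_derivative (a * f3 P + I / of_real s)) (at P)"
        by (rule has_vector_derivative_transform_within_open[OF d3, of "{W<..}"]) (use 3 Wp in \<open>auto simp: Z_def\<close>)
      moreover have "Psi W P = 0" "Z P = f3 P" using 3 Wp by (auto simp: Psi_def Z_def)
      moreover have "complex_of_real \<tau> * lam * f3 P =
             complex_of_real (\<tau> * \<Omega>) * (a * f3 P + I / of_real s) - f3 P
             + complex_of_real (0 / \<kappa>) * f3 P - complex_of_real (1 / \<kappa>) * I"
        using tp Op kp by (simp add: a_def s_def m_def field_simps)
      ultimately show ?thesis unfolding I' by metis
    qed
  qed
  show ?thesis
    unfolding is_eigenfunction_def Z_def[symmetric]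
    using cont gr Znz der by blast
qed


definition "sg = (if Re m < 0 then -W else W)"
definition "fin P = exp (b * of_real (P - sg)) / (of_real \<kappa> * m * k) - 1/k"
definition "ex c P = (fin c + 1/(of_real \<kappa> * m)) * exp (a * of_real (P - c)) - 1/(of_real \<kappa> * m)"
definition "f1 = (if Re m < 0 then (\<lambda>_. -1/(of_real \<kappa> * m)) else ex (-W))"
definition "f3 = (if Re m < 0 then ex W else (\<lambda>_. -1/(of_real \<kappa> * m)))"
definition "Phi = (\<lambda>P. if P \<le> -W then f1 P else if P \<le> W then fin P else f3 P)"
definition "EE = exp (b * of_real (W - sg)) - exp (b * of_real (-W - sg))"
definition "Jfin = EE / (b * of_real \<kappa> * m * k) - 2 * of_real W / k"

lemma km: "of_real \<kappa> * m = k + 1" by (simp add: k_def)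

lemma fin_sg: "k \<noteq> 0 \<Longrightarrow> m \<noteq> 0 \<Longrightarrow> fin sg = -1/(of_real \<kappa> * m)"
proof -
  assume k0: "k \<noteq> 0" and m0: "m \<noteq> 0"
  define x where "x = of_real \<kappa> * m"
  have x0: "x \<noteq> 0" using kp m0 by (simp add: x_def)
  have "fin sg = 1/(x*k) - 1/k" by (simp add: fin_def x_def)
  also have "\<dots> = (1 - x)/(x*k)" using x0 k0 by (simp add: field_simps)
  also have "1 - x = - k" by (simp add: k_def x_def)
  also have "- k/(x*k) = -1/x" using k0 by simp
  finally show ?thesis by (simp add: x_def)
qed

lemma b0: "k \<noteq> 0 \<Longrightarrow> b \<noteq> 0" using s_pos by (simp add: b_def)

lemma fin_int:
  assumes k0: "k \<noteq> 0" and m0: "m \<noteq> 0"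
  shows "(fin has_integral Jfin) {-W..W}"
proof -
  define C where "C = 1 / (b * of_real \<kappa> * m * k)"
  define F where "F P = C * exp (b * of_real (P - sg)) - of_real P * (1 / k)" for P
  have "(fin has_integral (F W - F (-W))) {-W..W}"
  proof (rule ftc_at)
    fix x
    have "(F has_vector_derivative (C * (b * exp (b * of_real (x - sg))) - 1 * (1 / k))) (at x)"
      unfolding F_def
      by (intro has_vector_derivative_diff has_vector_derivative_mult_right has_vector_derivative_mult_left vd_exp_shift vd_ofreal)
    moreover have "C * (b * exp (b * of_real (x - sg))) - 1 * (1 / k) = fin x"
      using b0[OF k0] kp k0 m0 by (simp add: C_def fin_def field_simps)
    ultimately show "(F has_vector_derivative fin x) (at x)" by simp
  qed (use Wp in auto)
  moreover have "F W - F (-W) = Jfin"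
    using b0[OF k0] kp k0 m0 by (simp add: F_def C_def Jfin_def EE_def field_simps)
  ultimately show ?thesis by simp
qed


lemma inv_id: "k \<noteq> 0 \<Longrightarrow> m \<noteq> 0 \<Longrightarrow> 1/(of_real \<kappa> * m * k) = 1/k - 1/(of_real \<kappa> * m)"
  using fin_sg by (simp add: fin_def algebra_simps)

lemma fin_alt: "k \<noteq> 0 \<Longrightarrow> m \<noteq> 0 \<Longrightarrow> fin P = exp (b * of_real (P - sg)) * (1/k - 1/(of_real \<kappa> * m)) - 1/k"
  using inv_id by (simp add: fin_def divide_inverse)

lemma struct_lem:
  assumes Z: "is_eigenfunction \<kappa> \<tau> \<Omega> W lam Z" and r: "Re m \<noteq> 0" and k0: "k \<noteq> 0"
  shows "Z P = IZ Z * Phi P"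
proof -
  have m0: "m \<noteq> 0" using r by auto
  define I where "I = IZ Z"
  have zsg: "Z sg = - I / (of_real \<kappa> * m)"
    using const_left[OF Z, of "-W"] const_right[OF Z, of W] r unfolding sg_def I_def
    by (cases "Re m < 0") auto
  have sgW: "\<bar>sg\<bar> \<le> W" using Wp by (simp add: sg_def)
  have inner: "Z Q = I * fin Q" if Q: "\<bar>Q\<bar> \<le> W" for Q
  proof -
    have "Z Q = (Z sg + I / k) * exp (b * of_real (Q - sg)) - I / k"
      using inside[OF Z k0 Q sgW] unfolding I_def .
    also have "\<dots> = I * fin Q"
      unfolding zsg fin_alt[OF k0 m0] by (simp add: algebra_simps)
    finally show ?thesis .
  qed
  show ?thesis
  proof (cases "Re m < 0")
    case True
    consider "P \<le> -W" | "\<bar>P\<bar> \<le> W" "\<not> P \<le> -W" | "P > W" by linarith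
    thus ?thesis
    proof cases
      case 1 thus ?thesis using const_left[OF Z True 1] True by (simp add: Phi_def f1_def I_def)
    next
      case 2 thus ?thesis using inner[OF 2(1)] by (simp add: Phi_def I_def abs_le_iff)
    next
      case 3
      have "Z P = (Z W + I / (of_real \<kappa> * m)) * exp (a * of_real (P - W)) - I / (of_real \<kappa> * m)"
        using out_right[OF Z m0, of P] 3 unfolding I_def by simp
      also have "\<dots> = I * ex W P"
      proof -
        have zW: "Z W = I * fin W" using inner[of W] Wp by simp
        show ?thesis unfolding zW by (simp add: ex_def algebra_simps)
      qed
      finally show ?thesis using 3 Wp True by (simp add: Phi_def f3_def I_def)
    qed
  next
    case False
    hence r': "Re m > 0" using r by simp
    consider "P \<le> -W" | "\<bar>P\<bar> \<le> W" "\<not> P \<le> -W" | "P > W" by linarith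
    thus ?thesis
    proof cases
      case 1
      have "Z P = (Z (-W) + I / (of_real \<kappa> * m)) * exp (a * of_real (P + W)) - I / (of_real \<kappa> * m)"
        using out_left[OF Z m0 1] unfolding I_def by simp
      also have "\<dots> = I * ex (-W) P"
      proof -
        have zW: "Z (-W) = I * fin (-W)" using inner[of "-W"] Wp by simp
        show ?thesis unfolding zW by (simp add: ex_def algebra_simps)
      qed
      finally show ?thesis using 1 False by (simp add: Phi_def f1_def I_def)
    next
      case 2 thus ?thesis using inner[OF 2(1)] by (simp add: Phi_def I_def abs_le_iff)
    next
      case 3 thus ?thesis using const_right[OF Z r', of P] False Wp by (simp add: Phi_def f3_def I_def)
    qed
  qed
qed


lemma Phi_in:
  assumes k0: "k \<noteq> 0" and m0: "m \<noteq> 0" and Q: "\<bar>Q\<bar> \<le> W"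
  shows "Phi Q = fin Q"
proof (cases "Q \<le> -W")
  case True
  hence Q': "Q = -W" using Q by linarith
  have "f1 (-W) = fin (-W)"
    using fin_sg[OF k0 m0] by (cases "Re m < 0") (simp_all add: f1_def ex_def sg_def)
  thus ?thesis using Q' by (simp add: Phi_def)
next
  case False thus ?thesis using Q by (simp add: Phi_def abs_le_iff)
qed

lemma IZ_eq:
  assumes Z: "is_eigenfunction \<kappa> \<tau> \<Omega> W lam Z" and r: "Re m \<noteq> 0" and k0: "k \<noteq> 0"
  shows "IZ Z = IZ Z * Jfin"
proof -
  have m0: "m \<noteq> 0" using r by auto
  have "((\<lambda>Q. IZ Z * fin Q) has_integral IZ Z * Jfin) {-W..W}"
    by (intro has_integral_mult_right fin_int k0 m0)
  hence "(Z has_integral IZ Z * Jfin) {-W..W}"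
    by (rule has_integral_cong[THEN iffD1, rotated]) (use struct_lem[OF Z r k0] Phi_in[OF k0 m0] in auto)
  thus ?thesis unfolding IZ_def[of Z] by (intro integral_unique psi_has_integral)
qed

lemma IZ_nz:
  assumes Z: "is_eigenfunction \<kappa> \<tau> \<Omega> W lam Z" and r: "Re m \<noteq> 0" and k0: "k \<noteq> 0"
  shows "IZ Z \<noteq> 0"
proof
  assume "IZ Z = 0"
  hence "Z = (\<lambda>_. 0)" using struct_lem[OF Z r k0] by auto
  thus False using Z unfolding is_eigenfunction_def by blast
qed

lemma eig_J:
  assumes Z: "is_eigenfunction \<kappa> \<tau> \<Omega> W lam Z" and r: "Re m \<noteq> 0" and k0: "k \<noteq> 0"
  shows "Jfin = 1"
  using IZ_eq[OF assms] IZ_nz[OF assms] by (metis mult_cancel_left1)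

lemma a_km: "m \<noteq> 0 \<Longrightarrow> a / (of_real \<kappa> * m) = 1 / of_real s"
  using kp tp Op by (simp add: a_def s_def field_simps)

lemma b_k: "k \<noteq> 0 \<Longrightarrow> b / k = 1 / of_real s"
  using s_pos by (simp add: b_def field_simps)

lemma d_ex:
  assumes "m \<noteq> 0"
  shows "(ex c has_vector_derivative (a * ex c P + 1 / of_real s)) (at P)"
proof -
  have "(ex c has_vector_derivative ((fin c + 1/(of_real \<kappa> * m)) * (a * exp (a * of_real (P - c))) - 0)) (at P)"
    unfolding ex_def[abs_def]
    by (intro has_vector_derivative_diff has_vector_derivative_mult_right vd_exp_shift has_vector_derivative_const)
  moreover have "(fin c + 1/(of_real \<kappa> * m)) * (a * exp (a * of_real (P - c))) - 0 = a * ex c P + a / (of_real \<kappa> * m)"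
    by (simp add: ex_def algebra_simps)
  ultimately show ?thesis unfolding a_km[OF assms] by simp
qed

lemma d_const:
  assumes "m \<noteq> 0"
  shows "((\<lambda>_. -1/(of_real \<kappa> * m)) has_vector_derivative (a * (-1/(of_real \<kappa> * m)) + 1 / of_real s)) (at P)"
proof -
  have "a * (-1/(of_real \<kappa> * m)) = - (a / (of_real \<kappa> * m))" by simp
  hence "a * (-1/(of_real \<kappa> * m)) + 1 / of_real s = 0"
    unfolding a_km[OF assms] by simp
  thus ?thesis by (simp add: has_vector_derivative_const)
qed

lemma d_fin:
  assumes "k \<noteq> 0"
  shows "(fin has_vector_derivative (b * fin P + 1 / of_real s)) (at P)"
proof -
  have "(fin has_vector_derivative ((b * exp (b * of_real (P - sg))) / (of_real \<kappa> * m * k) - 0)) (at P)"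
    unfolding fin_def[abs_def]
    by (intro has_vector_derivative_diff has_vector_derivative_divide vd_exp_shift has_vector_derivative_const)
  moreover have "(b * exp (b * of_real (P - sg))) / (of_real \<kappa> * m * k) - 0 = b * fin P + b / k"
    using assms by (simp add: fin_def right_diff_distrib)
  ultimately show ?thesis unfolding b_k[OF assms] by simp
qed


lemma ex_bound:
  assumes "Re a * (P - c) \<le> 0"
  shows "norm (ex c P) \<le> norm (fin c + 1/(of_real \<kappa> * m)) + norm (1/(of_real \<kappa> * m))"
proof -
  have "norm (ex c P) \<le> norm ((fin c + 1/(of_real \<kappa> * m)) * exp (a * of_real (P - c))) + norm (1/(of_real \<kappa> * m))"
    unfolding ex_def by (rule norm_triangle_ineq4)
  also have "norm ((fin c + 1/(of_real \<kappa> * m)) * exp (a * of_real (P - c))) = norm (fin c + 1/(of_real \<kappa> * m)) * exp (Re a * (P - c))"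
    by (simp add: norm_mult)
  also have "\<dots> \<le> norm (fin c + 1/(of_real \<kappa> * m)) * 1"
    using assms by (intro mult_left_mono) auto
  finally show ?thesis by simp
qed

lemma f1_bound:
  assumes "Re m \<noteq> 0" "P \<le> -W"
  shows "norm (f1 P) \<le> norm (fin (-W) + 1/(of_real \<kappa> * m)) + norm (1/(of_real \<kappa> * m))"
proof (cases "Re m < 0")
  case True thus ?thesis by (simp add: f1_def norm_divide)
next
  case False
  hence "Re a > 0" using assms(1) tp Op by (simp add: Re_a)
  hence "Re a * (P - (-W)) \<le> 0" using assms(2) by (intro mult_nonneg_nonpos) auto
  from ex_bound[OF this] False show ?thesis by (simp add: f1_def)
qed

lemma f3_bound:
  assumes "Re m \<noteq> 0" "P \<ge> W"
  shows "norm (f3 P) \<le> norm (fin W + 1/(of_real \<kappa> * m)) + norm (1/(of_real \<kappa> * m))"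
proof (cases "Re m < 0")
  case False thus ?thesis by (simp add: f3_def norm_divide)
next
  case True
  hence "Re a < 0" using tp Op by (simp add: Re_a divide_neg_pos)
  hence "Re a * (P - W) \<le> 0" using assms(2) by (intro mult_nonpos_nonneg) auto
  from ex_bound[OF this] True show ?thesis by (simp add: f3_def)
qed

lemma Phi_bound:
  assumes r: "Re m \<noteq> 0" and k0: "k \<noteq> 0"
  obtains B where "B \<ge> 0" "\<And>P. norm (Phi P) \<le> B"
proof -
  have cfin: "continuous_on {-W..W} fin" by (rule cont_of_deriv[OF d_fin[OF k0]])
  obtain M where M: "M \<ge> 0" "\<And>P. \<bar>P\<bar> \<le> W \<Longrightarrow> norm (fin P) \<le> M"
    using bounded_on_interval[OF cfin] by blast
  define B where "B = max M (max (norm (fin (-W) + 1/(of_real \<kappa> * m)) + norm (1/(of_real \<kappa> * m)))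
                                  (norm (fin W + 1/(of_real \<kappa> * m)) + norm (1/(of_real \<kappa> * m))))"
  show ?thesis
  proof (rule that[of B])
    show "B \<ge> 0" using M by (simp add: B_def)
    fix P
    consider "P \<le> -W" | "\<bar>P\<bar> \<le> W" "\<not> P \<le> -W" | "P > W" by linarith
    thus "norm (Phi P) \<le> B"
    proof cases
      case 1 thus ?thesis using f1_bound[OF r 1] by (simp add: Phi_def B_def)
    next
      case 2 thus ?thesis using M(2)[of P] by (simp add: Phi_def B_def abs_le_iff)
    next
      case 3 thus ?thesis using f3_bound[OF r, of P] Wp by (simp add: Phi_def B_def)
    qed
  qed
qed

lemma Phi_eig:
  assumes r: "Re m \<noteq> 0" and k0: "k \<noteq> 0" and J: "Jfin = 1"
  shows "is_eigenfunction \<kappa> \<tau> \<Omega> W lam Phi"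
proof -
  have m0: "m \<noteq> 0" using r by auto
  obtain B where B: "B \<ge> 0" "\<And>P. norm (Phi P) \<le> B" using Phi_bound[OF r k0] by blast
  have Bg: "B \<le> B * (1 + \<bar>P\<bar>)" for P using B(1) by (simp add: algebra_simps)
  have "is_eigenfunction \<kappa> \<tau> \<Omega> W lam (\<lambda>P. if P \<le> -W then f1 P else if P \<le> W then fin P else f3 P)"
  proof (rule verify[where I=1 and Ca=B and Cb=B])
    show "(f1 has_vector_derivative a * f1 P + 1 / of_real s) (at P)" for P
      using d_const[OF m0] d_ex[OF m0] by (simp add: f1_def)
    show "(f3 has_vector_derivative a * f3 P + 1 / of_real s) (at P)" for P
      using d_const[OF m0] d_ex[OF m0] by (simp add: f3_def)
    show "(fin has_vector_derivative b * fin P + 1 / of_real s) (at P)" for P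
      by (rule d_fin[OF k0])
    show "f1 (- W) = fin (- W)" using Phi_in[OF k0 m0, of "-W"] Wp by (simp add: Phi_def)
    show "fin W = f3 W"
      using fin_sg[OF k0 m0] by (cases "Re m < 0") (simp_all add: f3_def ex_def sg_def)
    show "(fin has_integral 1) {- W..W}" using fin_int[OF k0 m0] J by simp
    show "norm (f1 P) \<le> B * (1 + \<bar>P\<bar>)" if "P \<le> -W" for P
      using B(2)[of P] that Bg[of P] by (simp add: Phi_def)
    show "norm (f3 P) \<le> B * (1 + \<bar>P\<bar>)" if "P \<ge> W" for P
    proof (cases "P = W")
      case True
      hence "f3 P = Phi P" using \<open>fin W = f3 W\<close> Wp by (simp add: Phi_def)
      thus ?thesis using B(2)[of P] Bg[of P] by simp
    next
      case False
      hence "f3 P = Phi P" using that Wp by (simp add: Phi_def)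
      thus ?thesis using B(2)[of P] Bg[of P] by simp
    qed
  qed simp
  thus ?thesis unfolding Phi_def .
qed

lemma simple_bounded:
  assumes r: "Re m \<noteq> 0" and k0: "k \<noteq> 0"
  shows "(\<forall>Z1 Z2. is_eigenfunction \<kappa> \<tau> \<Omega> W lam Z1 \<and> is_eigenfunction \<kappa> \<tau> \<Omega> W lam Z2
              \<longrightarrow> (\<exists>c::complex. Z2 = (\<lambda>P. c * Z1 P)))
          \<and> (\<forall>Z. is_eigenfunction \<kappa> \<tau> \<Omega> W lam Z \<longrightarrow> bounded (range Z))"
proof safe
  fix Z1 Z2 assume Z1: "is_eigenfunction \<kappa> \<tau> \<Omega> W lam Z1" and Z2: "is_eigenfunction \<kappa> \<tau> \<Omega> W lam Z2"
  show "\<exists>c. Z2 = (\<lambda>P. c * Z1 P)"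
  proof (intro exI[of _ "IZ Z2 / IZ Z1"] ext)
    fix P
    show "Z2 P = IZ Z2 / IZ Z1 * Z1 P"
      using struct_lem[OF Z1 r k0, of P] struct_lem[OF Z2 r k0, of P] IZ_nz[OF Z1 r k0] by simp
  qed
next
  fix Z assume Z: "is_eigenfunction \<kappa> \<tau> \<Omega> W lam Z"
  obtain B where B: "B \<ge> 0" "\<And>P. norm (Phi P) \<le> B" using Phi_bound[OF r k0] by blast
  show "bounded (range Z)" unfolding bounded_iff
  proof (intro exI[of _ "norm (IZ Z) * B"] ballI)
    fix x assume "x \<in> range Z"
    then obtain P where "x = Z P" by blast
    thus "norm x \<le> norm (IZ Z) * B"
      using struct_lem[OF Z r k0, of P] B(2)[of P] by (simp add: norm_mult mult_left_mono)
  qed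
qed


lemma k_zero_not:
  assumes k0: "k = 0"
  shows "\<not> is_eigenfunction \<kappa> \<tau> \<Omega> W lam Z"
proof
  assume Z: "is_eigenfunction \<kappa> \<tau> \<Omega> W lam Z"
  have km1: "of_real \<kappa> * m = 1" using k0 by (simp add: k_def)
  have "Re (of_real \<kappa> * m) = 1" using km1 by simp
  hence "Re m = 1 / \<kappa>" using kp by (simp add: field_simps)
  hence r: "Re m > 0" using kp by simp
  have m0: "m \<noteq> 0" using r by auto
  define I where "I = IZ Z"
  have zW: "Z W = - I" using const_right[OF Z r, of W] km1 by (simp add: I_def)
  have zin: "Z P = - I + (I / of_real s) * of_real (P - W)" if "\<bar>P\<bar> \<le> W" for P
    using inside0[OF Z k0 that, of W] Wp zW by (simp add: I_def)
  define F where "F P = - I * of_real P + (I / of_real s) * of_real (P * P / 2 - W * P)" for P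
  have "((\<lambda>P. - I + (I / of_real s) * of_real (P - W)) has_integral (F W - F (-W))) {-W..W}"
  proof (rule ftc_at)
    fix x
    have "((\<lambda>P. P * P / 2 - W * P) has_real_derivative (x - W)) (at x)"
      by (auto intro!: derivative_eq_intros simp: field_simps)
    hence "((\<lambda>P. of_real (P * P / 2 - W * P) :: complex) has_vector_derivative of_real (x - W)) (at x)"
      by (rule has_vector_derivative_of_real)
    hence "(F has_vector_derivative (- I * 1 + (I / of_real s) * of_real (x - W))) (at x)"
      unfolding F_def by (intro has_vector_derivative_add has_vector_derivative_mult_right vd_ofreal)
    thus "(F has_vector_derivative - I + (I / of_real s) * of_real (x - W)) (at x)" by simp
  qed (use Wp in auto)
  hence "(Z has_integral (F W - F (-W))) {-W..W}"
    by (rule has_integral_cong[THEN iffD1, rotated]) (use zin in auto)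
  hence "I = F W - F (-W)" unfolding I_def IZ_def[of Z] by (intro integral_unique psi_has_integral)
  also have "F W - F (-W) = - I * of_real (2 * W + 2 * W * W / s)"
    using s_pos by (simp add: F_def field_simps)
  finally have e: "I = - I * of_real (2 * W + 2 * W * W / s)" .
  have "I * of_real (1 + 2 * W + 2 * W * W / s) = I + I * of_real (2 * W + 2 * W * W / s)"
    by (simp add: distrib_left)
  also have "\<dots> = 0" by (subst (1) e) simp
  finally have "I * of_real (1 + 2 * W + 2 * W * W / s) = 0" .
  moreover have "1 + 2 * W + 2 * W * W / s > 0" using Wp s_pos by (simp add: add_pos_pos)
  hence "(of_real (1 + 2 * W + 2 * W * W / s) :: complex) \<noteq> 0" by (simp only: of_real_eq_0_iff)
  ultimately have I0: "I = 0" by (simp only: mult_eq_0_iff) simp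
  have "Z P = 0" for P
  proof -
    consider "P \<le> -W" | "\<bar>P\<bar> \<le> W" | "P \<ge> W" by linarith
    thus ?thesis
    proof cases
      case 1
      have "Z (-W) = 0" using zin[of "-W"] I0 Wp by simp
      thus ?thesis using out_left[OF Z m0 1] I0 by (simp add: I_def)
    next
      case 2 thus ?thesis using zin[OF 2] I0 by simp
    next
      case 3 thus ?thesis using const_right[OF Z r 3] I0 by (simp add: I_def)
    qed
  qed
  hence "Z = (\<lambda>_. 0)" by auto
  thus False using Z unfolding is_eigenfunction_def by blast
qed

definition "outs I v c P = (if m = 0 then v + I * of_real (P - c) / of_real s
   else (v + I / (of_real \<kappa> * m)) * exp (a * of_real (P - c)) - I / (of_real \<kappa> * m))"

lemma outs_c: "outs I v c c = v" by (simp add: outs_def)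

lemma outs_d: "(outs I v c has_vector_derivative (a * outs I v c P + I / of_real s)) (at P)"
proof (cases "m = 0")
  case True
  hence a0: "a = 0" by (simp add: a_def)
  have "((\<lambda>P. of_real (P - c) :: complex) has_vector_derivative of_real 1) (at P)"
    by (rule has_vector_derivative_of_real) (auto intro!: derivative_eq_intros)
  hence "((\<lambda>P. v + I * of_real (P - c) / of_real s) has_vector_derivative (0 + I * of_real 1 / of_real s)) (at P)"
    by (intro has_vector_derivative_add has_vector_derivative_divide has_vector_derivative_mult_right has_vector_derivative_const)
  thus ?thesis using True a0 by (simp add: outs_def[abs_def])
next
  case False
  have "((\<lambda>P. (v + I / (of_real \<kappa> * m)) * exp (a * of_real (P - c)) - I / (of_real \<kappa> * m)) has_vector_derivative ((v + I / (of_real \<kappa> * m)) * (a * exp (a * of_real (P - c))) - 0)) (at P)"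
    by (intro has_vector_derivative_diff has_vector_derivative_mult_right vd_exp_shift has_vector_derivative_const)
  moreover have "(v + I / (of_real \<kappa> * m)) * (a * exp (a * of_real (P - c))) - 0 = a * outs I v c P + I * (a / (of_real \<kappa> * m))"
    using False by (simp add: outs_def algebra_simps)
  ultimately show ?thesis using False unfolding a_km[OF False] by (simp add: outs_def[abs_def])
qed

lemma outs_bound:
  assumes r: "Re m = 0"
  shows "norm (outs I v c P) \<le> (norm v + norm I * (1 + \<bar>c\<bar>) / s + 2 * norm (I / (of_real \<kappa> * m))) * (1 + \<bar>P\<bar>)"
proof (cases "m = 0")
  case True
  have "norm (outs I v c P) \<le> norm v + norm (I * of_real (P - c) / of_real s)"
    using True unfolding outs_def by (simp add: norm_triangle_ineq)
  also have "norm (I * of_real (P - c) / of_real s) = norm I * \<bar>P - c\<bar> / s"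
    using s_pos by (simp add: norm_mult norm_divide of_real_diff[symmetric] del: of_real_diff)
  also have "\<bar>P - c\<bar> \<le> (1 + \<bar>c\<bar>) * (1 + \<bar>P\<bar>)"
    by (simp add: algebra_simps) (smt (verit, best) abs_ge_zero mult_nonneg_nonneg)
  hence "norm I * \<bar>P - c\<bar> / s \<le> norm I * ((1 + \<bar>c\<bar>) * (1 + \<bar>P\<bar>)) / s"
    using s_pos by (intro divide_right_mono mult_left_mono) auto
  finally have "norm (outs I v c P) \<le> norm v + norm I * (1 + \<bar>c\<bar>) / s * (1 + \<bar>P\<bar>)" by simp
  also have "\<dots> \<le> (norm v + norm I * (1 + \<bar>c\<bar>) / s + 2 * norm (I / (of_real \<kappa> * m))) * (1 + \<bar>P\<bar>)"
    by (simp add: algebra_simps mult_left_mono_neg)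
  finally show ?thesis .
next
  case False
  have ra: "Re a = 0" using r by (simp add: Re_a)
  have "norm (outs I v c P) \<le> norm ((v + I / (of_real \<kappa> * m)) * exp (a * of_real (P - c))) + norm (I / (of_real \<kappa> * m))"
    using False unfolding outs_def by (simp add: norm_triangle_ineq4)
  also have "norm ((v + I / (of_real \<kappa> * m)) * exp (a * of_real (P - c))) = norm (v + I / (of_real \<kappa> * m))"
    using ra by (simp add: norm_mult)
  also have "\<dots> \<le> norm v + norm (I / (of_real \<kappa> * m))" by (rule norm_triangle_ineq)
  finally have "norm (outs I v c P) \<le> norm v + 2 * norm (I / (of_real \<kappa> * m))" by simp
  also have "\<dots> \<le> (norm v + norm I * (1 + \<bar>c\<bar>) / s + 2 * norm (I / (of_real \<kappa> * m))) * 1"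
    using s_pos by simp
  also have "\<dots> \<le> (norm v + norm I * (1 + \<bar>c\<bar>) / s + 2 * norm (I / (of_real \<kappa> * m))) * (1 + \<bar>P\<bar>)"
    using s_pos by (intro mult_left_mono) auto
  finally show ?thesis .
qed


lemma cont_spec:
  assumes r: "Re m = 0"
  shows "\<exists>Z. is_eigenfunction \<kappa> \<tau> \<Omega> W lam Z"
proof -
  have "Re k = -1" using r by (simp add: k_def)
  hence k0: "k \<noteq> 0" by auto
  have bnz: "b \<noteq> 0" by (rule b0[OF k0])
  define E2 where "E2 = (exp (b * of_real W) - exp (b * of_real (-W))) / b"
  define I where "I = (if E2 = 0 then 0 else 1 :: complex)"
  define D where "D = (if E2 = 0 then 1 else (1 + 2 * of_real W / k) / E2)"
  define f2 where "f2 P = D * exp (b * of_real P) - I / k" for P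
  define g1 where "g1 = outs I (f2 (-W)) (-W)"
  define g3 where "g3 = outs I (f2 W) W"
  have DI: "D * E2 - 2 * of_real W * I / k = I"
    unfolding D_def I_def by (auto simp: field_simps)
  have "is_eigenfunction \<kappa> \<tau> \<Omega> W lam (\<lambda>P. if P \<le> -W then g1 P else if P \<le> W then f2 P else g3 P)"
  proof (rule verify[where I=I])
    show "(g1 has_vector_derivative a * g1 P + I / of_real s) (at P)" for P unfolding g1_def by (rule outs_d)
    show "(g3 has_vector_derivative a * g3 P + I / of_real s) (at P)" for P unfolding g3_def by (rule outs_d)
    show "(f2 has_vector_derivative b * f2 P + I / of_real s) (at P)" for P
    proof -
      have "(f2 has_vector_derivative (D * (b * exp (b * of_real P)) - 0)) (at P)"
        unfolding f2_def[abs_def]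
        by (intro has_vector_derivative_diff has_vector_derivative_mult_right vd_exp has_vector_derivative_const)
      moreover have "D * (b * exp (b * of_real P)) - 0 = b * f2 P + I * (b / k)"
        by (simp add: f2_def algebra_simps)
      ultimately show ?thesis unfolding b_k[OF k0] by simp
    qed
    show "g1 (-W) = f2 (-W)" unfolding g1_def by (rule outs_c)
    show "f2 W = g3 W" unfolding g3_def by (rule outs_c[symmetric])
    show "(f2 has_integral I) {-W..W}"
    proof -
      define F where "F P = D * (exp (b * of_real P) / b) - of_real P * (I / k)" for P
      have "(f2 has_integral (F W - F (-W))) {-W..W}"
      proof (rule ftc_at)
        fix x
        have "(F has_vector_derivative (D * ((b * exp (b * of_real x)) / b) - 1 * (I / k))) (at x)"
          unfolding F_def
          by (intro has_vector_derivative_diff has_vector_derivative_mult_right has_vector_derivative_mult_left has_vector_derivative_divide vd_exp vd_ofreal)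
        thus "(F has_vector_derivative f2 x) (at x)" using bnz by (simp add: f2_def)
      qed (use Wp in auto)
      moreover have "F W - F (-W) = D * E2 - 2 * of_real W * I / k"
        by (simp add: F_def E2_def algebra_simps diff_divide_distrib)
      ultimately show ?thesis using DI by simp
    qed
    show "norm (g1 P) \<le> (norm (f2 (-W)) + norm I * (1 + \<bar>-W\<bar>) / s + 2 * norm (I / (of_real \<kappa> * m))) * (1 + \<bar>P\<bar>)" for P
      unfolding g1_def by (rule outs_bound[OF r])
    show "norm (g3 P) \<le> (norm (f2 W) + norm I * (1 + \<bar>W\<bar>) / s + 2 * norm (I / (of_real \<kappa> * m))) * (1 + \<bar>P\<bar>)" for P
      unfolding g3_def by (rule outs_bound[OF r])
    show "I \<noteq> 0 \<or> (\<exists>P. (if P \<le> -W then g1 P else if P \<le> W then f2 P else g3 P) \<noteq> 0)"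
    proof (cases "E2 = 0")
      case True
      hence "(if (0::real) \<le> -W then g1 0 else if 0 \<le> W then f2 0 else g3 0) = 1"
        using Wp by (simp add: f2_def D_def I_def)
      thus ?thesis by (metis one_neq_zero)
    next
      case False thus ?thesis by (simp add: I_def)
    qed
  qed
  thus ?thesis by blast
qed


lemma eigval_iff:
  assumes r: "Re m \<noteq> 0" and k0: "k \<noteq> 0"
  shows "is_eigenvalue \<kappa> \<tau> \<Omega> W lam \<longleftrightarrow> Jfin = 1"
  using eig_J[OF _ r k0] Phi_eig[OF r k0] unfolding is_eigenvalue_def by blast

lemma Jcond:
  assumes k0: "k \<noteq> 0" and m0: "m \<noteq> 0"
  shows "Jfin = 1 \<longleftrightarrow> EE = (of_real \<kappa> * m) * k * (k + of_real (2 * W)) / of_real s"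
proof -
  have s0: "(of_real s :: complex) \<noteq> 0" using s_pos by simp
  have km0: "of_real \<kappa> * m \<noteq> 0" using kp m0 by simp
  have "Jfin = EE * of_real s / (of_real \<kappa> * m * k * k) - 2 * of_real W / k"
    using s0 k0 by (simp add: Jfin_def b_def)
  hence "Jfin = 1 \<longleftrightarrow> EE * of_real s / (of_real \<kappa> * m * k * k) - 2 * of_real W / k = 1" by simp
  also have "\<dots> \<longleftrightarrow> EE * of_real s = (of_real \<kappa> * m) * k * (k + of_real (2 * W))"
    using s0 k0 km0 by (simp add: field_simps)
  also have "\<dots> \<longleftrightarrow> EE = (of_real \<kappa> * m) * k * (k + of_real (2 * W)) / of_real s"
    using s0 by (simp add: field_simps)
  finally show ?thesis .
qed

lemma k_expr: "of_real \<kappa> * of_real \<tau> * lam + of_real \<kappa> - 1 = k"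
  by (simp add: k_def m_def algebra_simps)
lemma km_expr: "of_real \<kappa> * of_real \<tau> * lam + of_real \<kappa> = of_real \<kappa> * m"
  by (simp add: m_def algebra_simps)
lemma s_expr: "complex_of_real (\<kappa> * \<tau> * \<bar>\<Omega>\<bar>) = of_real s"
  using Op by (simp add: s_def)

lemma main_pos:
  shows
    "(\<forall>lam'::complex. lam' = lam \<longrightarrow> Re (complex_of_real \<tau> * lam') < -1 \<longrightarrow>
        (is_eigenvalue \<kappa> \<tau> \<Omega> W lam' \<longleftrightarrow>
          exp ((of_real \<kappa> * of_real \<tau> * lam' + of_real \<kappa> - 1)
                 / of_real (\<kappa> * \<tau> * \<bar>\<Omega>\<bar>) * of_real (2 * W)) - 1
          = (of_real \<kappa> * of_real \<tau> * lam' + of_real \<kappa>)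
            * (of_real \<kappa> * of_real \<tau> * lam' + of_real \<kappa> - 1)
            * (of_real \<kappa> * of_real \<tau> * lam' + of_real \<kappa> - 1 + of_real (2 * W))
            / of_real (\<kappa> * \<tau> * \<bar>\<Omega>\<bar>)))
     \<and> (\<forall>lam'::complex. lam' = lam \<longrightarrow> Re (complex_of_real \<tau> * lam') = -1 \<longrightarrow>
          (\<exists>Z. is_eigenfunction \<kappa> \<tau> \<Omega> W lam' Z))
     \<and> (\<forall>lam'::complex. lam' = lam \<longrightarrow> Re (complex_of_real \<tau> * lam') > -1 \<longrightarrow>
        (is_eigenvalue \<kappa> \<tau> \<Omega> W lam' \<longleftrightarrow>
          (1 - exp (- ((of_real \<kappa> * of_real \<tau> * lam' + of_real \<kappa> - 1)
                 / of_real (\<kappa> * \<tau> * \<bar>\<Omega>\<bar>) * of_real (2 * W)))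
          = (of_real \<kappa> * of_real \<tau> * lam' + of_real \<kappa>)
            * (of_real \<kappa> * of_real \<tau> * lam' + of_real \<kappa> - 1)
            * (of_real \<kappa> * of_real \<tau> * lam' + of_real \<kappa> - 1 + of_real (2 * W))
            / of_real (\<kappa> * \<tau> * \<bar>\<Omega>\<bar>)
          \<and> complex_of_real \<tau> * lam' \<noteq> of_real ((1 - \<kappa>) / \<kappa>))))
     \<and> (\<forall>lam'::complex. lam' = lam \<longrightarrow> Re (complex_of_real \<tau> * lam') \<noteq> -1 \<and> is_eigenvalue \<kappa> \<tau> \<Omega> W lam' \<longrightarrow>
          (\<forall>Z1 Z2. is_eigenfunction \<kappa> \<tau> \<Omega> W lam' Z1 \<and> is_eigenfunction \<kappa> \<tau> \<Omega> W lam' Z2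
              \<longrightarrow> (\<exists>c::complex. Z2 = (\<lambda>P. c * Z1 P)))
          \<and> (\<forall>Z. is_eigenfunction \<kappa> \<tau> \<Omega> W lam' Z \<longrightarrow> bounded (range Z)))"
proof -
  have Rem: "Re m = Re (complex_of_real \<tau> * lam) + 1" by (simp add: m_def)
  have bs: "b = k / of_real s" by (simp add: b_def)
  have P1: "Re (complex_of_real \<tau> * lam) < -1 \<Longrightarrow> (is_eigenvalue \<kappa> \<tau> \<Omega> W lam \<longleftrightarrow>
          exp ((of_real \<kappa> * of_real \<tau> * lam + of_real \<kappa> - 1)
                 / of_real (\<kappa> * \<tau> * \<bar>\<Omega>\<bar>) * of_real (2 * W)) - 1
          = (of_real \<kappa> * of_real \<tau> * lam + of_real \<kappa>)
            * (of_real \<kappa> * of_real \<tau> * lam + of_real \<kappa> - 1)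
            * (of_real \<kappa> * of_real \<tau> * lam + of_real \<kappa> - 1 + of_real (2 * W))
            / of_real (\<kappa> * \<tau> * \<bar>\<Omega>\<bar>))"
  proof -
    assume "Re (complex_of_real \<tau> * lam) < -1"
    hence r: "Re m < 0" using Rem by simp
    hence m0: "m \<noteq> 0" by auto
    have "Re k = \<kappa> * Re m - 1" by (simp add: k_def)
    moreover have "\<kappa> * Re m < 0" using r kp by (simp add: mult_pos_neg)
    ultimately have k0: "k \<noteq> 0" by auto
    have EE: "EE = exp (k / of_real s * of_real (2 * W)) - 1"
      using r by (simp add: EE_def sg_def bs)
    have r': "Re m \<noteq> 0" using r by simp
    have ev: "is_eigenvalue \<kappa> \<tau> \<Omega> W lam \<longleftrightarrow> exp (k / of_real s * of_real (2 * W)) - 1 = (of_real \<kappa> * m) * k * (k + of_real (2 * W)) / of_real s"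
      using eigval_iff[OF r' k0] Jcond[OF k0 m0] EE by simp
    show ?thesis unfolding km_expr s_expr using ev unfolding k_def .
  qed
  have P3: "Re (complex_of_real \<tau> * lam) > -1 \<Longrightarrow> (is_eigenvalue \<kappa> \<tau> \<Omega> W lam \<longleftrightarrow>
          (1 - exp (- ((of_real \<kappa> * of_real \<tau> * lam + of_real \<kappa> - 1)
                 / of_real (\<kappa> * \<tau> * \<bar>\<Omega>\<bar>) * of_real (2 * W)))
          = (of_real \<kappa> * of_real \<tau> * lam + of_real \<kappa>)
            * (of_real \<kappa> * of_real \<tau> * lam + of_real \<kappa> - 1)
            * (of_real \<kappa> * of_real \<tau> * lam + of_real \<kappa> - 1 + of_real (2 * W))
            / of_real (\<kappa> * \<tau> * \<bar>\<Omega>\<bar>)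
          \<and> complex_of_real \<tau> * lam \<noteq> of_real ((1 - \<kappa>) / \<kappa>)))"
  proof -
    assume "Re (complex_of_real \<tau> * lam) > -1"
    hence r: "Re m > 0" using Rem by simp
    hence m0: "m \<noteq> 0" by auto
    have kk: "k = 0 \<longleftrightarrow> complex_of_real \<tau> * lam = of_real ((1 - \<kappa>) / \<kappa>)"
    proof -
      have "k = 0 \<longleftrightarrow> of_real \<kappa> * (complex_of_real \<tau> * lam) = of_real (1 - \<kappa>)"
        by (simp add: k_def m_def algebra_simps)
      also have "\<dots> \<longleftrightarrow> complex_of_real \<tau> * lam = of_real ((1 - \<kappa>) / \<kappa>)"
        using kp by (simp add: field_simps)
      finally show ?thesis .
    qed
    show ?thesis
    proof (cases "k = 0")
      case True
      hence "\<not> is_eigenvalue \<kappa> \<tau> \<Omega> W lam" using k_zero_not unfolding is_eigenvalue_def by blast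
      thus ?thesis using kk True by simp
    next
      case False
      have EE: "EE = 1 - exp (- (k / of_real s * of_real (2 * W)))"
        using r by (simp add: EE_def sg_def bs)
      have r': "Re m \<noteq> 0" using r by simp
      have ev: "is_eigenvalue \<kappa> \<tau> \<Omega> W lam \<longleftrightarrow> 1 - exp (- (k / of_real s * of_real (2 * W))) = (of_real \<kappa> * m) * k * (k + of_real (2 * W)) / of_real s"
        using eigval_iff[OF r' False] Jcond[OF False m0] EE by simp
      have kk': "complex_of_real \<tau> * lam \<noteq> of_real ((1 - \<kappa>) / \<kappa>)" using kk False by simp
      show ?thesis unfolding km_expr s_expr using ev kk' unfolding k_def by simp
    qed
  qed
  have P2: "Re (complex_of_real \<tau> * lam) = -1 \<Longrightarrow> \<exists>Z. is_eigenfunction \<kappa> \<tau> \<Omega> W lam Z"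
    using cont_spec Rem by simp
  have P4: "Re (complex_of_real \<tau> * lam) \<noteq> -1 \<Longrightarrow> is_eigenvalue \<kappa> \<tau> \<Omega> W lam \<Longrightarrow>
          (\<forall>Z1 Z2. is_eigenfunction \<kappa> \<tau> \<Omega> W lam Z1 \<and> is_eigenfunction \<kappa> \<tau> \<Omega> W lam Z2
              \<longrightarrow> (\<exists>c::complex. Z2 = (\<lambda>P. c * Z1 P)))
          \<and> (\<forall>Z. is_eigenfunction \<kappa> \<tau> \<Omega> W lam Z \<longrightarrow> bounded (range Z))"
  proof -
    assume a1: "Re (complex_of_real \<tau> * lam) \<noteq> -1" and a2: "is_eigenvalue \<kappa> \<tau> \<Omega> W lam"
    have r: "Re m \<noteq> 0" using a1 Rem by simp
    have k0: "k \<noteq> 0" using a2 k_zero_not unfolding is_eigenvalue_def by blast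
    show ?thesis by (rule simple_bounded[OF r k0])
  qed
  show ?thesis using P1 P2 P3 P4 by blast
qed

end

lemma reflect:
  fixes Z :: "real \<Rightarrow> complex"
  assumes Z: "is_eigenfunction \<kappa> \<tau> \<Omega> W lam Z" and Wp: "0 < W"
  shows "is_eigenfunction \<kappa> \<tau> (-\<Omega>) W lam (\<lambda>P. Z (-P))"
proof -
  have cont: "continuous_on UNIV Z" using Z unfolding is_eigenfunction_def by blast
  obtain C where C: "\<And>P. norm (Z P) \<le> C * (1 + \<bar>P\<bar>)" using Z unfolding is_eigenfunction_def by blast
  have nz: "Z \<noteq> (\<lambda>_. 0)" using Z unfolding is_eigenfunction_def by blast
  have cont': "continuous_on UNIV (\<lambda>P. Z (-P))"
    by (rule continuous_on_compose2[OF cont]) (auto intro: continuous_intros)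
  have nz': "(\<lambda>P. Z (-P)) \<noteq> (\<lambda>_. 0)"
  proof
    assume "(\<lambda>P. Z (-P)) = (\<lambda>_. 0)"
    hence "Z = (\<lambda>_. 0)" by (metis minus_minus)
    thus False using nz by simp
  qed
  define J where "J = integral {-W..W} Z"
  have iZ: "(Z has_integral J) {-W..W}" unfolding J_def
    by (rule integrable_integral, rule integrable_continuous_interval, rule continuous_on_subset[OF cont]) auto
  have iZ': "((\<lambda>P. Z (-P)) has_integral J) {-W..W}"
    using iZ has_integral_reflect_real[where f=Z and i=J and a="-W" and b=W] by simp
  have I1: "integral UNIV (\<lambda>Q. complex_of_real (Psi W Q) * Z Q) = J"
    by (rule integral_unique[OF psi_has_integral[OF iZ]])
  have I2: "integral UNIV (\<lambda>Q. complex_of_real (Psi W Q) * Z (-Q)) = J"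
    by (rule integral_unique[OF psi_has_integral[OF iZ']])
  have psi: "Psi W (-P) = Psi W P" for P by (simp add: Psi_def)
  show ?thesis unfolding is_eigenfunction_def
  proof (intro conjI allI impI)
    show "continuous_on UNIV (\<lambda>P. Z (- P))" by (rule cont')
    show "\<exists>C. \<forall>P. norm (Z (- P)) \<le> C * (1 + \<bar>P\<bar>)" using C by (metis abs_minus_cancel)
    show "(\<lambda>P. Z (- P)) \<noteq> (\<lambda>_. 0)" by (rule nz')
    fix P assume P: "P \<noteq> - W \<and> P \<noteq> W"
    hence "-P \<noteq> -W \<and> -P \<noteq> W" by auto
    then obtain Z' where d: "(Z has_vector_derivative Z') (at (-P))" and
      e: "complex_of_real \<tau> * lam * Z (-P) =
             complex_of_real (\<tau> * \<Omega>) * Z' - Z (-P)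
             + complex_of_real (Psi W (-P) / \<kappa>) * Z (-P)
             - complex_of_real (1 / \<kappa>) * integral UNIV (\<lambda>Q. complex_of_real (Psi W Q) * Z Q)"
      using Z unfolding is_eigenfunction_def by blast
    have "((uminus :: real \<Rightarrow> real) has_vector_derivative -1) (at P)"
      using has_real_derivative_iff_has_vector_derivative by (auto intro!: derivative_eq_intros)
    from vector_diff_chain_at[OF this, of Z Z'] d
    have d': "((\<lambda>P. Z (-P)) has_vector_derivative (- Z')) (at P)" by (simp add: o_def)
    show "\<exists>Z'. ((\<lambda>P. Z (- P)) has_vector_derivative Z') (at P) \<and>
             complex_of_real \<tau> * lam * Z (- P) =
             complex_of_real (\<tau> * - \<Omega>) * Z' - Z (- P) +
             complex_of_real (Psi W P / \<kappa>) * Z (- P) -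
             complex_of_real (1 / \<kappa>) * integral UNIV (\<lambda>Q. complex_of_real (Psi W Q) * Z (- Q))"
      using d' e unfolding I1 I2 psi by (intro exI[of _ "- Z'"]) simp
  qed
qed

lemma ef_reflect_iff:
  assumes "0 < W"
  shows "is_eigenfunction \<kappa> \<tau> (-\<Omega>) W lam Z \<longleftrightarrow> is_eigenfunction \<kappa> \<tau> \<Omega> W lam (\<lambda>P. Z (-P))"
  using reflect[OF _ assms, of \<kappa> \<tau> "-\<Omega>" lam Z] reflect[OF _ assms, of \<kappa> \<tau> \<Omega> lam "\<lambda>P. Z (-P)"] by auto

lemma ev_reflect_iff:
  assumes "0 < W"
  shows "is_eigenvalue \<kappa> \<tau> (-\<Omega>) W lam \<longleftrightarrow> is_eigenvalue \<kappa> \<tau> \<Omega> W lam"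
  unfolding is_eigenvalue_def using reflect[OF _ assms, of \<kappa> \<tau> "-\<Omega>" lam] reflect[OF _ assms, of \<kappa> \<tau> \<Omega> lam] by auto

lemma stmt_pos:
  fixes \<kappa> \<tau> \<Omega> W :: real
  assumes "0 < \<kappa>" "\<kappa> < 1" "0 < \<tau>" "0 < \<Omega>" "0 < W"
  shows
    "(\<forall>lam::complex. Re (complex_of_real \<tau> * lam) < -1 \<longrightarrow>
        (is_eigenvalue \<kappa> \<tau> \<Omega> W lam \<longleftrightarrow>
          exp ((of_real \<kappa> * of_real \<tau> * lam + of_real \<kappa> - 1)
                 / of_real (\<kappa> * \<tau> * \<bar>\<Omega>\<bar>) * of_real (2 * W)) - 1
          = (of_real \<kappa> * of_real \<tau> * lam + of_real \<kappa>)
            * (of_real \<kappa> * of_real \<tau> * lam + of_real \<kappa> - 1)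
            * (of_real \<kappa> * of_real \<tau> * lam + of_real \<kappa> - 1 + of_real (2 * W))
            / of_real (\<kappa> * \<tau> * \<bar>\<Omega>\<bar>)))
     \<and> (\<forall>lam::complex. Re (complex_of_real \<tau> * lam) = -1 \<longrightarrow>
          (\<exists>Z. is_eigenfunction \<kappa> \<tau> \<Omega> W lam Z))
     \<and> (\<forall>lam::complex. Re (complex_of_real \<tau> * lam) > -1 \<longrightarrow>
        (is_eigenvalue \<kappa> \<tau> \<Omega> W lam \<longleftrightarrow>
          (1 - exp (- ((of_real \<kappa> * of_real \<tau> * lam + of_real \<kappa> - 1)
                 / of_real (\<kappa> * \<tau> * \<bar>\<Omega>\<bar>) * of_real (2 * W)))
          = (of_real \<kappa> * of_real \<tau> * lam + of_real \<kappa>)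
            * (of_real \<kappa> * of_real \<tau> * lam + of_real \<kappa> - 1)
            * (of_real \<kappa> * of_real \<tau> * lam + of_real \<kappa> - 1 + of_real (2 * W))
            / of_real (\<kappa> * \<tau> * \<bar>\<Omega>\<bar>)
          \<and> complex_of_real \<tau> * lam \<noteq> of_real ((1 - \<kappa>) / \<kappa>))))
     \<and> (\<forall>lam::complex. Re (complex_of_real \<tau> * lam) \<noteq> -1 \<and> is_eigenvalue \<kappa> \<tau> \<Omega> W lam \<longrightarrow>
          (\<forall>Z1 Z2. is_eigenfunction \<kappa> \<tau> \<Omega> W lam Z1 \<and> is_eigenfunction \<kappa> \<tau> \<Omega> W lam Z2
              \<longrightarrow> (\<exists>c::complex. Z2 = (\<lambda>P. c * Z1 P)))
          \<and> (\<forall>Z. is_eigenfunction \<kappa> \<tau> \<Omega> W lam Z \<longrightarrow> bounded (range Z)))"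
proof -
  have E: "eig \<kappa> \<tau> \<Omega> W" using assms by unfold_locales auto
  show ?thesis using eig.main_pos[OF E] by blast
qed

theorem theorem2p2:
  fixes \<kappa> \<tau> \<Omega> W :: real
  assumes "0 < \<kappa>" "\<kappa> < 1" "0 < \<tau>" "\<Omega> \<noteq> 0" "0 < W"
  shows
    "(\<forall>lam::complex. Re (complex_of_real \<tau> * lam) < -1 \<longrightarrow>
        (is_eigenvalue \<kappa> \<tau> \<Omega> W lam \<longleftrightarrow>
          exp ((of_real \<kappa> * of_real \<tau> * lam + of_real \<kappa> - 1)
                 / of_real (\<kappa> * \<tau> * \<bar>\<Omega>\<bar>) * of_real (2 * W)) - 1
          = (of_real \<kappa> * of_real \<tau> * lam + of_real \<kappa>)
            * (of_real \<kappa> * of_real \<tau> * lam + of_real \<kappa> - 1)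
            * (of_real \<kappa> * of_real \<tau> * lam + of_real \<kappa> - 1 + of_real (2 * W))
            / of_real (\<kappa> * \<tau> * \<bar>\<Omega>\<bar>)))
     \<and> (\<forall>lam::complex. Re (complex_of_real \<tau> * lam) = -1 \<longrightarrow>
          (\<exists>Z. is_eigenfunction \<kappa> \<tau> \<Omega> W lam Z))
     \<and> (\<forall>lam::complex. Re (complex_of_real \<tau> * lam) > -1 \<longrightarrow>
        (is_eigenvalue \<kappa> \<tau> \<Omega> W lam \<longleftrightarrow>
          (1 - exp (- ((of_real \<kappa> * of_real \<tau> * lam + of_real \<kappa> - 1)
                 / of_real (\<kappa> * \<tau> * \<bar>\<Omega>\<bar>) * of_real (2 * W)))
          = (of_real \<kappa> * of_real \<tau> * lam + of_real \<kappa>)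
            * (of_real \<kappa> * of_real \<tau> * lam + of_real \<kappa> - 1)
            * (of_real \<kappa> * of_real \<tau> * lam + of_real \<kappa> - 1 + of_real (2 * W))
            / of_real (\<kappa> * \<tau> * \<bar>\<Omega>\<bar>)
          \<and> complex_of_real \<tau> * lam \<noteq> of_real ((1 - \<kappa>) / \<kappa>))))
     \<and> (\<forall>lam::complex. Re (complex_of_real \<tau> * lam) \<noteq> -1 \<and> is_eigenvalue \<kappa> \<tau> \<Omega> W lam \<longrightarrow>
          (\<forall>Z1 Z2. is_eigenfunction \<kappa> \<tau> \<Omega> W lam Z1 \<and> is_eigenfunction \<kappa> \<tau> \<Omega> W lam Z2
              \<longrightarrow> (\<exists>c::complex. Z2 = (\<lambda>P. c * Z1 P)))
          \<and> (\<forall>Z. is_eigenfunction \<kappa> \<tau> \<Omega> W lam Z \<longrightarrow> bounded (range Z)))"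
proof (cases "\<Omega> > 0")
  case True
  thus ?thesis using stmt_pos[OF assms(1-3) True assms(5)] by blast
next
  case False
  hence Om: "- \<Omega> > 0" using assms(4) by simp
  note S = stmt_pos[OF assms(1-3) Om assms(5)]
  have ab: "\<bar>- \<Omega>\<bar> = \<bar>\<Omega>\<bar>" by simp
  have evr: "is_eigenvalue \<kappa> \<tau> (- \<Omega>) W lam \<longleftrightarrow> is_eigenvalue \<kappa> \<tau> \<Omega> W lam" for lam
    by (rule ev_reflect_iff[OF assms(5)])
  have efr: "is_eigenfunction \<kappa> \<tau> (- \<Omega>) W lam Z \<longleftrightarrow> is_eigenfunction \<kappa> \<tau> \<Omega> W lam (\<lambda>P. Z (-P))" for lam Z
    by (rule ef_reflect_iff[OF assms(5)])
  have S1: "\<forall>lam::complex. Re (complex_of_real \<tau> * lam) < -1 \<longrightarrow>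
        (is_eigenvalue \<kappa> \<tau> \<Omega> W lam \<longleftrightarrow>
          exp ((of_real \<kappa> * of_real \<tau> * lam + of_real \<kappa> - 1)
                 / of_real (\<kappa> * \<tau> * \<bar>\<Omega>\<bar>) * of_real (2 * W)) - 1
          = (of_real \<kappa> * of_real \<tau> * lam + of_real \<kappa>)
            * (of_real \<kappa> * of_real \<tau> * lam + of_real \<kappa> - 1)
            * (of_real \<kappa> * of_real \<tau> * lam + of_real \<kappa> - 1 + of_real (2 * W))
            / of_real (\<kappa> * \<tau> * \<bar>\<Omega>\<bar>))"
    using S unfolding evr ab by blast
  have S3: "\<forall>lam::complex. Re (complex_of_real \<tau> * lam) > -1 \<longrightarrow>
        (is_eigenvalue \<kappa> \<tau> \<Omega> W lam \<longleftrightarrow>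
          (1 - exp (- ((of_real \<kappa> * of_real \<tau> * lam + of_real \<kappa> - 1)
                 / of_real (\<kappa> * \<tau> * \<bar>\<Omega>\<bar>) * of_real (2 * W)))
          = (of_real \<kappa> * of_real \<tau> * lam + of_real \<kappa>)
            * (of_real \<kappa> * of_real \<tau> * lam + of_real \<kappa> - 1)
            * (of_real \<kappa> * of_real \<tau> * lam + of_real \<kappa> - 1 + of_real (2 * W))
            / of_real (\<kappa> * \<tau> * \<bar>\<Omega>\<bar>)
          \<and> complex_of_real \<tau> * lam \<noteq> of_real ((1 - \<kappa>) / \<kappa>)))"
    using S unfolding evr ab by blast
  have S2: "\<forall>lam::complex. Re (complex_of_real \<tau> * lam) = -1 \<longrightarrow>
          (\<exists>Z. is_eigenfunction \<kappa> \<tau> \<Omega> W lam Z)"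
    using S unfolding efr by blast
  have S4: "\<forall>lam::complex. Re (complex_of_real \<tau> * lam) \<noteq> -1 \<and> is_eigenvalue \<kappa> \<tau> \<Omega> W lam \<longrightarrow>
          (\<forall>Z1 Z2. is_eigenfunction \<kappa> \<tau> \<Omega> W lam Z1 \<and> is_eigenfunction \<kappa> \<tau> \<Omega> W lam Z2
              \<longrightarrow> (\<exists>c::complex. Z2 = (\<lambda>P. c * Z1 P)))
          \<and> (\<forall>Z. is_eigenfunction \<kappa> \<tau> \<Omega> W lam Z \<longrightarrow> bounded (range Z))"
  proof (intro allI impI conjI)
    fix lam :: complex
    assume a: "Re (complex_of_real \<tau> * lam) \<noteq> -1 \<and> is_eigenvalue \<kappa> \<tau> \<Omega> W lam"
    hence a': "Re (complex_of_real \<tau> * lam) \<noteq> -1 \<and> is_eigenvalue \<kappa> \<tau> (-\<Omega>) W lam" using evr by simp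
    have H1: "\<And>Z1 Z2. is_eigenfunction \<kappa> \<tau> (-\<Omega>) W lam Z1 \<Longrightarrow> is_eigenfunction \<kappa> \<tau> (-\<Omega>) W lam Z2
              \<Longrightarrow> (\<exists>c::complex. Z2 = (\<lambda>P. c * Z1 P))"
      using S a' by blast
    have H2: "\<And>Z. is_eigenfunction \<kappa> \<tau> (-\<Omega>) W lam Z \<Longrightarrow> bounded (range Z)"
      using S a' by blast
    fix Z1 Z2 :: "real \<Rightarrow> complex"
    assume Z: "is_eigenfunction \<kappa> \<tau> \<Omega> W lam Z1 \<and> is_eigenfunction \<kappa> \<tau> \<Omega> W lam Z2"
    hence "is_eigenfunction \<kappa> \<tau> (-\<Omega>) W lam (\<lambda>P. Z1 (-P))" "is_eigenfunction \<kappa> \<tau> (-\<Omega>) W lam (\<lambda>P. Z2 (-P))"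
      unfolding efr by simp_all
    then obtain c where c: "(\<lambda>P. Z2 (-P)) = (\<lambda>P. c * Z1 (-P))" using H1 by blast
    have "Z2 = (\<lambda>P. c * Z1 P)"
    proof
      fix P show "Z2 P = c * Z1 P" using fun_cong[OF c, of "-P"] by simp
    qed
    thus "\<exists>c. Z2 = (\<lambda>P. c * Z1 P)" by blast
  next
    fix lam :: complex
    assume a: "Re (complex_of_real \<tau> * lam) \<noteq> -1 \<and> is_eigenvalue \<kappa> \<tau> \<Omega> W lam"
    hence a': "Re (complex_of_real \<tau> * lam) \<noteq> -1 \<and> is_eigenvalue \<kappa> \<tau> (-\<Omega>) W lam" using evr by simp
    have H2: "\<And>Z. is_eigenfunction \<kappa> \<tau> (-\<Omega>) W lam Z \<Longrightarrow> bounded (range Z)"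
      using S a' by blast
    fix Z assume "is_eigenfunction \<kappa> \<tau> \<Omega> W lam Z"
    hence "is_eigenfunction \<kappa> \<tau> (-\<Omega>) W lam (\<lambda>P. Z (-P))" unfolding efr by simp
    hence "bounded (range (\<lambda>P. Z (-P)))" by (rule H2)
    moreover have "range (\<lambda>P. Z (-P)) = range Z"
      by (auto simp: image_def) (metis minus_minus)
    ultimately show "bounded (range Z)" by simp
  qed
  show ?thesis using S1 S2 S3 S4 by blast
qed

end
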